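(* Let $q$ be a prime power, let $\lambda \in \mathbb{F}_{q^n}\setminus\mathbb{F}_q$, $t = [\mathbb{F}_q(\lambda):\mathbb{F}_q]$, let $0 < m < t$, let $\overline{S}$ be an $\mathbb{F}_{q^t}$-subspace of $\mathbb{F}_{q^n}$ of $\mathbb{F}_{q^t}$-dimension $l>0$ with $\overline{S} \cap \mathbb{F}_{q^t} = \{0\}$, and let $S = \overline{S} \oplus \langle 1, \lambda, \ldots, \lambda^{m-1}\rangle_{\mathbb{F}_q}$. If $b \in \mathbb{F}_{q^t}^*$, then \[ S \cap bS = \overline{S} \oplus \left(\langle 1, \lambda, \ldots, \lambda^{m-1}\rangle_{\mathbb{F}_q} \cap b\langle 1, \lambda, \ldots, \lambda^{m-1}\rangle_{\mathbb{F}_q}\right). \] *)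

theory Defs
  imports "HOL-Number_Theory.Prime_Powers"
begin

definition is_subfield :: "'a::field set \<Rightarrow> bool" where
  "is_subfield F \<longleftrightarrow> 0 \<in> F \<and> 1 \<in> F \<and>
     (\<forall>x\<in>F. \<forall>y\<in>F. x + y \<in> F \<and> x * y \<in> F) \<and>
     (\<forall>x\<in>F. - x \<in> F \<and> inverse x \<in> F)"

definition field_adjoin :: "'a::field set \<Rightarrow> 'a \<Rightarrow> 'a set" where
  "field_adjoin K a = \<Inter>{F. is_subfield F \<and> K \<subseteq> F \<and> a \<in> F}"

definition is_subspace_over :: "'a::field set \<Rightarrow> 'a set \<Rightarrow> bool" where
  "is_subspace_over F V \<longleftrightarrow> 0 \<in> V \<and>
     (\<forall>x\<in>V. \<forall>y\<in>V. x + y \<in> V) \<and> (\<forall>c\<in>F. \<forall>x\<in>V. c * x \<in> V)"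

definition pow_span :: "'a::field set \<Rightarrow> 'a \<Rightarrow> nat \<Rightarrow> 'a set" where
  "pow_span K a m = {(\<Sum>i<m. c i * a ^ i) | c. \<forall>i<m. c i \<in> K}"

definition sumset :: "'a::plus set \<Rightarrow> 'a set \<Rightarrow> 'a set" where
  "sumset A B = {a + b | a b. a \<in> A \<and> b \<in> B}"

end

theory Submission imports Defs begin
lemma adjoin_subfield: "is_subfield (field_adjoin K a)"
  unfolding field_adjoin_def is_subfield_def by (intro conjI ballI; simp)
lemma adjoin_K: "K \<subseteq> field_adjoin K a"
  unfolding field_adjoin_def by blast
lemma adjoin_a: "a \<in> field_adjoin K a"
  unfolding field_adjoin_def by blast
lemma subfield_pow: "is_subfield F \<Longrightarrow> a \<in> F \<Longrightarrow> a ^ i \<in> F"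
  by (induction i) (simp_all add: is_subfield_def)
lemma subfield_sum: "is_subfield F \<Longrightarrow> (\<forall>i\<in>A. f i \<in> F) \<Longrightarrow> sum f A \<in> F"
  by (induction A rule: infinite_finite_induct) (simp_all add: is_subfield_def)
lemma zero_pow_span: "is_subfield K \<Longrightarrow> 0 \<in> pow_span K a m"
  unfolding pow_span_def by (rule CollectI, rule exI[of _ "\<lambda>_. 0"]) (simp add: is_subfield_def)
lemma pow_span_sub: assumes "is_subfield F" "K \<subseteq> F" "a \<in> F"
  shows "pow_span K a m \<subseteq> F"
proof
  fix x assume "x \<in> pow_span K a m"
  then obtain c where x: "x = (\<Sum>i<m. c i * a ^ i)" and c: "\<forall>i<m. c i \<in> K"
    unfolding pow_span_def by blast
  have "\<forall>i\<in>{..<m}. c i * a ^ i \<in> F"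
  proof
    fix i assume "i \<in> {..<m}"
    then have "c i \<in> F" using c assms(2) by blast
    moreover have "a ^ i \<in> F" by (rule subfield_pow[OF assms(1,3)])
    ultimately show "c i * a ^ i \<in> F" using assms(1) by (simp add: is_subfield_def)
  qed
  then show "x \<in> F" unfolding x by (rule subfield_sum[OF assms(1)])
qed
theorem lemma4p4:
  fixes K Sbar :: "'a::{field, finite} set"
    and lam b :: 'a and q n t m l :: nat
  assumes "primepow q"
    and "is_subfield K" and "card K = q" and "card (UNIV :: 'a set) = q ^ n"
    and "lam \<notin> K"
    and "card (field_adjoin K lam) = q ^ t"
    and "0 < m" and "m < t"
    and "is_subspace_over (field_adjoin K lam) Sbar"
    and "card Sbar = card (field_adjoin K lam) ^ l" and "l > 0"
    and "Sbar \<inter> field_adjoin K lam = {0}"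
    and "b \<in> field_adjoin K lam" and "b \<noteq> 0"
  shows "sumset Sbar (pow_span K lam m) \<inter> (\<lambda>x. b * x) ` sumset Sbar (pow_span K lam m)
           = sumset Sbar (pow_span K lam m \<inter> (\<lambda>x. b * x) ` pow_span K lam m)
         \<and> Sbar \<inter> (pow_span K lam m \<inter> (\<lambda>x. b * x) ` pow_span K lam m) = {0}"
proof -
  define F where "F = field_adjoin K lam"
  define P where "P = pow_span K lam m"
  have sF: "is_subfield F" unfolding F_def by (rule adjoin_subfield)
  have PF: "P \<subseteq> F" unfolding P_def F_def
    by (rule pow_span_sub[OF adjoin_subfield adjoin_K adjoin_a])
  have S: "is_subspace_over F Sbar" using assms(9) F_def by simp
  have SF: "Sbar \<inter> F = {0}" using assms(12) F_def by simp
  have bF: "b \<in> F" using assms(13) F_def by simp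
  have P0: "0 \<in> P" unfolding P_def by (rule zero_pow_span[OF assms(2)])
  have S0: "0 \<in> Sbar" using S by (simp add: is_subspace_over_def)
  have Fneg: "\<And>x. x \<in> F \<Longrightarrow> - x \<in> F" using sF by (simp add: is_subfield_def)
  have Fadd: "\<And>x y. x \<in> F \<Longrightarrow> y \<in> F \<Longrightarrow> x + y \<in> F" using sF by (simp add: is_subfield_def)
  have Fmul: "\<And>x y. x \<in> F \<Longrightarrow> y \<in> F \<Longrightarrow> x * y \<in> F" using sF by (simp add: is_subfield_def)
  have binv: "inverse b \<in> F" using sF bF by (simp add: is_subfield_def)
  have m1: "-1 \<in> F" using sF by (simp add: is_subfield_def)
  have Sadd: "\<And>x y. x \<in> Sbar \<Longrightarrow> y \<in> Sbar \<Longrightarrow> x + y \<in> Sbar" using S by (simp add: is_subspace_over_def)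
  have Smul: "\<And>c x. c \<in> F \<Longrightarrow> x \<in> Sbar \<Longrightarrow> c * x \<in> Sbar" using S by (simp add: is_subspace_over_def)
  have Sneg: "\<And>x. x \<in> Sbar \<Longrightarrow> - x \<in> Sbar" using Smul[OF m1] by fastforce
  have eq: "sumset Sbar P \<inter> (\<lambda>x. b * x) ` sumset Sbar P = sumset Sbar (P \<inter> (\<lambda>x. b * x) ` P)"
  proof (intro equalityI subsetI)
    fix x assume "x \<in> sumset Sbar P \<inter> (\<lambda>x. b * x) ` sumset Sbar P"
    then obtain s p s' p' where s: "s \<in> Sbar" and p: "p \<in> P" and s': "s' \<in> Sbar" and p': "p' \<in> P"
      and x1: "x = s + p" and x2: "x = b * (s' + p')"
      unfolding sumset_def by blast
    have bs': "b * s' \<in> Sbar" using Smul[OF bF s'] .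
    have bp': "b * p' \<in> F" using Fmul[OF bF] p' PF by blast
    have "s + - (b * s') = b * p' + - p" using x1 x2 by (simp add: algebra_simps)
    moreover have "s + - (b * s') \<in> Sbar" using Sadd[OF s Sneg[OF bs']] .
    moreover have "b * p' + - p \<in> F" using Fadd[OF bp' Fneg] p PF by blast
    ultimately have "s + - (b * s') \<in> Sbar \<inter> F" by simp
    then have "s + - (b * s') = 0" using SF by blast
    then have "p = b * p'" using x1 x2 by (simp add: algebra_simps)
    then show "x \<in> sumset Sbar (P \<inter> (\<lambda>x. b * x) ` P)"
      unfolding sumset_def using x1 s p p' by blast
  next
    fix x assume "x \<in> sumset Sbar (P \<inter> (\<lambda>x. b * x) ` P)"
    then obtain s p p' where s: "s \<in> Sbar" and p: "p \<in> P" and p': "p' \<in> P"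
      and x1: "x = s + p" and pp: "p = b * p'"
      unfolding sumset_def by blast
    have "x \<in> sumset Sbar P" unfolding sumset_def using x1 s p by blast
    moreover have "inverse b * s \<in> Sbar" using Smul[OF binv s] .
    moreover have "x = b * (inverse b * s + p')" using x1 pp assms(14)
      by (simp add: algebra_simps)
    ultimately show "x \<in> sumset Sbar P \<inter> (\<lambda>x. b * x) ` sumset Sbar P"
      unfolding sumset_def using p' by blast
  qed
  have "Sbar \<inter> (P \<inter> (\<lambda>x. b * x) ` P) = {0}"
  proof
    show "Sbar \<inter> (P \<inter> (\<lambda>x. b * x) ` P) \<subseteq> {0}" using SF PF by blast
    have "(0::'a) \<in> (\<lambda>x. b * x) ` P" using P0 by (metis image_eqI mult_zero_right)
    then show "{0} \<subseteq> Sbar \<inter> (P \<inter> (\<lambda>x. b * x) ` P)" using S0 P0 by blast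
  qed
  then show ?thesis using eq P_def by simp
qed

end
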